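(* Let $\mathscr{C}$ be a hereditary graph class closed under disjoint union, and let $\Pi$ be a $\rho$-local minimization problem which is cuttable for $\mathscr{C}$ with parameter $\beta>0$. Then for every integer $r\ge0$ and real $\alpha>0$, every deterministic LOCAL algorithm $\mathsf{A}$ with round complexity $r$ that does not require polynomial identifiers and is an $\alpha$-approximation for $\Pi$ on $\mathscr{C}$ is an $(r+1)$-uniform $\alpha\beta$-approximation for $\Pi$ on $\mathscr{C}$.
   Context: Hereditary: closed under vertex deletion. $N^t[S]$ is the set of vertices at distance at most $t$ from $S$. Deterministic LOCAL model: distinct positive integer identifiers, synchronous rounds of unbounded message exchange with neighbours and unbounded local computation; with round complexity $r$ the output of a vertex $v$ depends only on the vertices at distance at most $r$ from $v$, their identifiers, and the edges incident to them. "Does not require polynomial identifiers": guarantees hold for every assignment of distinct positive integer identifiers. $\mathsf{A}(G)$ is the output set. Problems: $\Pi$ (feasible solutions are vertex subsets) is $\rho$-local if there is a LOCAL verifier with round complexity $\rho$ which accepts at every vertex iff the given $S\subseteq V(G)$ is feasible; $S$ is feasible on $X$ if the verifier accepts at every vertex of $X$; $\mathrm{OPT}_\Pi(G,X)$ is the minimum size of a set feasible on $X$; $\mathrm{OPT}_\Pi(G)=\mathrm{OPT}_\Pi(G,V(G))$. $\Pi$ is cuttable for $\mathscr{C}$ with parameter $\beta$ if for all $G\in\mathscr{C}$ and $X\subseteq V(G)$ there is $Y$ with $X\subseteq Y\subseteq V(G)$ and $\mathrm{OPT}_\Pi(G[Y])\le\beta\,\mathrm{OPT}_\Pi(G,X)$.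 $\mathsf{A}$ is an $\alpha$-approximation on $\mathscr{C}$ if on each $G\in\mathscr{C}$ it outputs a feasible solution of size at most $\alpha\,\mathrm{OPT}_\Pi(G)$; it is a $k$-uniform $\gamma$-approximation if it outputs feasible solutions and $|\mathsf{A}(G)\cap S|\le\gamma\,\mathrm{OPT}_\Pi(G,N^k[S])$ for all $G\in\mathscr{C}$ and $S\subseteq V(G)$. *)

theory Defs
  imports Complex_Main
begin

text \<open>Graphs whose vertices are their (distinct, positive integer) identifiers.
  A graph is a pair (vertex set, edge set); edges are stored symmetrically.\<close>

type_synonym graph = "nat set \<times> (nat \<times> nat) set"

definition verts :: "graph \<Rightarrow> nat set" where "verts G = fst G"
definition edges :: "graph \<Rightarrow> (nat \<times> nat) set" where "edges G = snd G"

definition wf_graph :: "graph \<Rightarrow> bool" where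
  "wf_graph G \<longleftrightarrow> finite (verts G) \<and> 0 \<notin> verts G \<and>
     edges G \<subseteq> verts G \<times> verts G \<and> sym (edges G) \<and> irrefl (edges G)"

definition nbrs :: "graph \<Rightarrow> nat \<Rightarrow> nat set" where
  "nbrs G u = {w. (u, w) \<in> edges G}"

definition closed_nbhd :: "graph \<Rightarrow> nat \<Rightarrow> nat set \<Rightarrow> nat set" where
  "closed_nbhd G t S = {v \<in> verts G. \<exists>u\<in>S. \<exists>k\<le>t. (u, v) \<in> (edges G) ^^ k}"

definition induce :: "graph \<Rightarrow> nat set \<Rightarrow> graph" where
  "induce G Y = (verts G \<inter> Y, edges G \<inter> (Y \<times> Y))"

definition disj_union :: "graph \<Rightarrow> graph \<Rightarrow> graph" where
  "disj_union G H = (verts G \<union> verts H, edges G \<union> edges H)"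

definition graph_iso :: "graph \<Rightarrow> graph \<Rightarrow> bool" where
  "graph_iso G H \<longleftrightarrow> (\<exists>f. bij_betw f (verts G) (verts H) \<and>
     (\<forall>u\<in>verts G. \<forall>v\<in>verts G. (u, v) \<in> edges G \<longleftrightarrow> (f u, f v) \<in> edges H))"

text \<open>A graph class: a set of (identifier-labelled) graphs closed under isomorphism,
  i.e. membership does not depend on the identifier assignment.\<close>
definition graph_class :: "graph set \<Rightarrow> bool" where
  "graph_class C \<longleftrightarrow> (\<forall>G\<in>C. wf_graph G) \<and>
     (\<forall>G\<in>C. \<forall>H. wf_graph H \<and> graph_iso G H \<longrightarrow> H \<in> C)"

definition hereditary :: "graph set \<Rightarrow> bool" where
  "hereditary C \<longleftrightarrow> (\<forall>G\<in>C. \<forall>Y. induce G Y \<in> C)"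

definition closed_disj_union :: "graph set \<Rightarrow> bool" where
  "closed_disj_union C \<longleftrightarrow>
     (\<forall>G\<in>C. \<forall>H\<in>C. verts G \<inter> verts H = {} \<longrightarrow> disj_union G H \<in> C)"

text \<open>Two graphs give vertex v the same radius-r view: the same vertices at distance
  at most r (which are their identifiers), and the same edges incident to them.\<close>
definition same_view :: "nat \<Rightarrow> graph \<Rightarrow> graph \<Rightarrow> nat \<Rightarrow> bool" where
  "same_view r G H v \<longleftrightarrow> v \<in> verts G \<and> v \<in> verts H \<and>
     closed_nbhd G r {v} = closed_nbhd H r {v} \<and>
     (\<forall>u\<in>closed_nbhd G r {v}. nbrs G u = nbrs H u)"

definition local_alg :: "nat \<Rightarrow> (graph \<Rightarrow> nat set) \<Rightarrow> bool" where
  "local_alg r A \<longleftrightarrow>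
     (\<forall>G. wf_graph G \<longrightarrow> A G \<subseteq> verts G) \<and>
     (\<forall>G H v. wf_graph G \<and> wf_graph H \<and> same_view r G H v \<longrightarrow> (v \<in> A G \<longleftrightarrow> v \<in> A H))"

text \<open>LOCAL verifier with round complexity rho: input is the candidate set S (each vertex
  knows whether it is in S); output at v is accept/reject.\<close>
definition local_verifier :: "nat \<Rightarrow> (graph \<Rightarrow> nat set \<Rightarrow> nat \<Rightarrow> bool) \<Rightarrow> bool" where
  "local_verifier \<rho> ver \<longleftrightarrow>
     (\<forall>G H S T v. wf_graph G \<and> wf_graph H \<and> same_view \<rho> G H v \<and>
        S \<inter> closed_nbhd G \<rho> {v} = T \<inter> closed_nbhd H \<rho> {v} \<longrightarrow> (ver G S v \<longleftrightarrow> ver H T v))"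

text \<open>A problem is given by its verifier; S is feasible on X iff the verifier accepts
  at every vertex of X.\<close>
definition feasible_on :: "(graph \<Rightarrow> nat set \<Rightarrow> nat \<Rightarrow> bool) \<Rightarrow> graph \<Rightarrow> nat set \<Rightarrow> nat set \<Rightarrow> bool" where
  "feasible_on ver G X S \<longleftrightarrow> S \<subseteq> verts G \<and> (\<forall>v\<in>X. ver G S v)"

definition feasible :: "(graph \<Rightarrow> nat set \<Rightarrow> nat \<Rightarrow> bool) \<Rightarrow> graph \<Rightarrow> nat set \<Rightarrow> bool" where
  "feasible ver G S \<longleftrightarrow> feasible_on ver G (verts G) S"

definition OPT_on :: "(graph \<Rightarrow> nat set \<Rightarrow> nat \<Rightarrow> bool) \<Rightarrow> graph \<Rightarrow> nat set \<Rightarrow> nat" where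
  "OPT_on ver G X = (LEAST n. \<exists>S. feasible_on ver G X S \<and> card S = n)"

definition OPT :: "(graph \<Rightarrow> nat set \<Rightarrow> nat \<Rightarrow> bool) \<Rightarrow> graph \<Rightarrow> nat" where
  "OPT ver G = OPT_on ver G (verts G)"

definition cuttable :: "graph set \<Rightarrow> (graph \<Rightarrow> nat set \<Rightarrow> nat \<Rightarrow> bool) \<Rightarrow> real \<Rightarrow> bool" where
  "cuttable C ver \<beta> \<longleftrightarrow> (\<forall>G\<in>C. \<forall>X. X \<subseteq> verts G \<longrightarrow>
     (\<exists>Y. X \<subseteq> Y \<and> Y \<subseteq> verts G \<and> real (OPT ver (induce G Y)) \<le> \<beta> * real (OPT_on ver G X)))"

definition approx :: "graph set \<Rightarrow> (graph \<Rightarrow> nat set \<Rightarrow> nat \<Rightarrow> bool) \<Rightarrow> real \<Rightarrow> (graph \<Rightarrow> nat set) \<Rightarrow> bool" where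
  "approx C ver \<alpha> A \<longleftrightarrow> (\<forall>G\<in>C. feasible ver G (A G) \<and> real (card (A G)) \<le> \<alpha> * real (OPT ver G))"

definition uniform_approx :: "graph set \<Rightarrow> (graph \<Rightarrow> nat set \<Rightarrow> nat \<Rightarrow> bool) \<Rightarrow> nat \<Rightarrow> real \<Rightarrow> (graph \<Rightarrow> nat set) \<Rightarrow> bool" where
  "uniform_approx C ver k \<gamma> A \<longleftrightarrow> (\<forall>G\<in>C. feasible ver G (A G) \<and>
     (\<forall>S. S \<subseteq> verts G \<longrightarrow> real (card (A G \<inter> S)) \<le> \<gamma> * real (OPT_on ver G (closed_nbhd G k S))))"

end

theory Submission
  imports Defs
begin

lemma relpow_restrict:
  "(v,w) \<in> E^^k \<Longrightarrow> (\<forall>j\<le>k. \<forall>x. (v,x) \<in> E^^j \<longrightarrow> x \<in> Y) \<Longrightarrow> (v,w) \<in> (E \<inter> Y \<times> Y)^^k"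
proof (induction k arbitrary: w)
  case 0
  then show ?case by simp
next
  case (Suc k)
  from Suc.prems(1) obtain x where vx: "(v,x) \<in> E^^k" and xw: "(x,w) \<in> E" by auto
  have "(v,x) \<in> (E \<inter> Y \<times> Y)^^k" by (intro Suc.IH[OF vx]) (use Suc.prems(2) le_SucI in blast)
  moreover have "x \<in> Y" by (metis Suc.prems(2) vx le_SucI order_refl)
  moreover have "w \<in> Y" using Suc.prems(2) Suc.prems(1) by blast
  ultimately show ?case using xw by auto
qed

lemma relpow_mono_sub: "(v,w) \<in> (E \<inter> (Z::('a\<times>'a) set))^^k \<Longrightarrow> (v,w) \<in> E^^k"
proof (induction k arbitrary: w)
  case 0 then show ?case by (blast elim: relpow_0_E intro: relpow_0_I)
next
  case (Suc k) then show ?case by auto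
qed

lemma view_induce:
  assumes wf: "wf_graph G" and v: "v \<in> verts G" and Y: "closed_nbhd G (r+1) {v} \<subseteq> Y"
  shows "same_view r G (induce G Y) v"
proof -
  have ev: "edges G \<subseteq> verts G \<times> verts G" using wf by (simp add: wf_graph_def)
  have reachY: "x \<in> Y" if "(v,x) \<in> edges G ^^ j" "j \<le> r+1" for x j
  proof (cases "j = 0")
    case True
    then have "x = v" using that by simp
    moreover have "(v,v) \<in> edges G ^^ 0" by simp
    ultimately have "x \<in> closed_nbhd G (r+1) {v}" using v unfolding closed_nbhd_def by blast
    then show ?thesis using Y by blast
  next
    case False
    then obtain i where "j = Suc i" by (cases j) auto
    then have "x \<in> verts G" using that(1) ev by auto
    then show ?thesis using that Y by (auto simp: closed_nbhd_def)
  qed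
  have vY: "v \<in> Y" using reachY[of v 0] by simp
  have eq: "closed_nbhd G r {v} = closed_nbhd (induce G Y) r {v}"
  proof
    show "closed_nbhd G r {v} \<subseteq> closed_nbhd (induce G Y) r {v}"
    proof
      fix w assume "w \<in> closed_nbhd G r {v}"
      then obtain k where k: "k \<le> r" "(v,w) \<in> edges G ^^ k" "w \<in> verts G"
        by (auto simp: closed_nbhd_def)
      have "(v,w) \<in> (edges G \<inter> Y \<times> Y)^^k"
        by (rule relpow_restrict[OF k(2)]) (use reachY k(1) in auto)
      moreover have "w \<in> Y" using reachY k by auto
      ultimately show "w \<in> closed_nbhd (induce G Y) r {v}"
        using k by (auto simp: closed_nbhd_def induce_def verts_def edges_def)
    qed
  next
    show "closed_nbhd (induce G Y) r {v} \<subseteq> closed_nbhd G r {v}"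
      by (auto simp: closed_nbhd_def induce_def verts_def edges_def intro: relpow_mono_sub)
  qed
  have nb: "nbrs G u = nbrs (induce G Y) u" if u: "u \<in> closed_nbhd G r {v}" for u
  proof -
    obtain k where k: "k \<le> r" "(v,u) \<in> edges G ^^ k" using u by (auto simp: closed_nbhd_def)
    have uY: "u \<in> Y" using reachY k by auto
    have "w \<in> Y" if "(u,w) \<in> edges G" for w
    proof -
      have "(v,w) \<in> edges G ^^ Suc k" using k(2) that by auto
      then show ?thesis using reachY[of w "Suc k"] k(1) by simp
    qed
    then show ?thesis using uY
      by (auto simp: nbrs_def induce_def edges_def)
  qed
  show ?thesis unfolding same_view_def using eq nb v vY
    by (auto simp: induce_def verts_def)
qed

theorem mainTheorem10:
  fixes C :: "graph set" and ver :: "graph \<Rightarrow> nat set \<Rightarrow> nat \<Rightarrow> bool"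
    and \<rho> r :: nat and \<alpha> \<beta> :: real and A :: "graph \<Rightarrow> nat set"
  assumes "graph_class C" and "hereditary C" and "closed_disj_union C"
    and "local_verifier \<rho> ver"
    and "\<beta> > 0" and "cuttable C ver \<beta>"
    and "\<alpha> > 0"
    and "local_alg r A" and "approx C ver \<alpha> A"
  shows "uniform_approx C ver (r + 1) (\<alpha> * \<beta>) A"
  unfolding uniform_approx_def
proof (intro ballI conjI allI impI)
  fix G assume G: "G \<in> C"
  show "feasible ver G (A G)" using assms(9) G by (simp add: approx_def)
  fix S assume S: "S \<subseteq> verts G"
  define X where "X = closed_nbhd G (r+1) S"
  have XV: "X \<subseteq> verts G" by (auto simp: X_def closed_nbhd_def)
  obtain Y where Y: "X \<subseteq> Y" "Y \<subseteq> verts G"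
    "real (OPT ver (induce G Y)) \<le> \<beta> * real (OPT_on ver G X)"
    using assms(6)[unfolded cuttable_def, rule_format, OF G XV] by (elim exE conjE)
  have GY: "induce G Y \<in> C" using assms(2) G by (simp add: hereditary_def)
  have wfG: "wf_graph G" using assms(1) G by (simp add: graph_class_def)
  have wfGY: "wf_graph (induce G Y)" using assms(1) GY by (simp add: graph_class_def)
  have sub: "A G \<inter> S \<subseteq> A (induce G Y)"
  proof
    fix v assume v: "v \<in> A G \<inter> S"
    have "closed_nbhd G (r+1) {v} \<subseteq> Y" using v Y(1) unfolding X_def closed_nbhd_def by blast
    then have "same_view r G (induce G Y) v" using view_induce wfG v S by blast
    then show "v \<in> A (induce G Y)" using assms(8) wfG wfGY v unfolding local_alg_def by blast
  qed
  have fin: "finite (A (induce G Y))"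
    using assms(8) wfGY unfolding local_alg_def wf_graph_def by (meson finite_subset)
  have "real (card (A G \<inter> S)) \<le> real (card (A (induce G Y)))"
    using card_mono[OF fin sub] by simp
  also have "\<dots> \<le> \<alpha> * real (OPT ver (induce G Y))"
    using assms(9) GY by (simp add: approx_def)
  also have "\<dots> \<le> \<alpha> * (\<beta> * real (OPT_on ver G X))"
    using Y(3) assms(7) by simp
  finally show "real (card (A G \<inter> S)) \<le> \<alpha> * \<beta> * real (OPT_on ver G (closed_nbhd G (r + 1) S))"
    by (simp add: X_def mult.assoc)
qed

end
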